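(* Let $G=(\Gamma,s)$ be a connected rooted graph. If $s$ is not a cut vertex of $G$ (i.e. the graph obtained by deleting $s$ and its incident edges is connected), then the constant function $\mathbf 1:\tilde V\to\mathbb{N}$, $v\mapsto 1$, belongs to $\mathrm{PPF}(G)$. If $s$ is a cut vertex of $G$, then $\mathrm{PPF}(G)=\emptyset$.
   Context: $\mathbb{N}=\{1,2,\dots\}$. A rooted graph $G=(\Gamma,s)$ is a finite undirected multigraph without loops with a distinguished vertex $s$ (the sink); $V$ is its vertex set and $\tilde V=V\setminus\{s\}$. $\mathrm{mult}(vw)$ is the number of edges between $v,w$; for $A\subseteq V$, $\deg^A(v)=\sum_{w\in A}\mathrm{mult}(vw)$ and $\deg(v)=\deg^V(v)$. A $G$-parking function is a function $p:\tilde V\to\mathbb{N}$ such that for every nonempty $S\subseteq\tilde V$ there exists $v\in S$ with $p(v)\le\deg^{V\setminus S}(v)$; $\mathrm{PF}(G)$ is their set. For $A\subseteq\tilde V$, $G^A$ denotes the induced subgraph of $G$ on $A\cup\{s\}$, rooted at $s$ (possibly disconnected; the definition of $G^A$-parking function is the same). For an ordered pair $(A,B)$ of nonempty disjoint sets with $A\cup B=\tilde V$ and $p\in\mathrm{PF}(G)$, define $p^A:A\to\mathbb{N}$, $p^A(v)=p(v)$, and $p^B:B\to\mathbb{Z}$, $p^B(v)=p(v)-\deg^A(v)$. $p$ is decomposable with respect to $(A,B)$ if $p^A\in\mathrm{PF}(G^A)$ and $p^B\in\mathrm{PF}(G^B)$. $p\in\mathrm{PF}(G)$ is prime if there is no such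 $(A,B)$ with respect to which $p$ is decomposable; $\mathrm{PPF}(G)$ is the set of prime $G$-parking functions. *)

theory Defs
  imports Main
begin

definition rooted_graph :: "'a set \<Rightarrow> ('a \<Rightarrow> 'a \<Rightarrow> nat) \<Rightarrow> 'a \<Rightarrow> bool" where
  "rooted_graph V mult s \<longleftrightarrow> finite V \<and> s \<in> V \<and>
     (\<forall>v w. mult v w = mult w v) \<and> (\<forall>v. mult v v = 0) \<and>
     (\<forall>v w. 0 < mult v w \<longrightarrow> v \<in> V \<and> w \<in> V)"

definition connected_on :: "'a set \<Rightarrow> ('a \<Rightarrow> 'a \<Rightarrow> nat) \<Rightarrow> bool" where
  "connected_on U mult \<longleftrightarrow>
     (\<forall>v\<in>U. \<forall>w\<in>U. (v, w) \<in> {(x, y). x \<in> U \<and> y \<in> U \<and> 0 < mult x y}\<^sup>*)"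

definition deg_in :: "('a \<Rightarrow> 'a \<Rightarrow> nat) \<Rightarrow> 'a set \<Rightarrow> 'a \<Rightarrow> nat" where
  "deg_in mult A v = (\<Sum>w\<in>A. mult v w)"

definition induced_mult :: "('a \<Rightarrow> 'a \<Rightarrow> nat) \<Rightarrow> 'a set \<Rightarrow> 'a \<Rightarrow> 'a \<Rightarrow> nat" where
  "induced_mult mult U v w = (if v \<in> U \<and> w \<in> U then mult v w else 0)"

text \<open>A function p on the non-sink vertices is represented by
  a total function 'a => int whose values outside V - {s} are ignored; membership in
  PF requires values in N = {1,2,...} on V - {s}.\<close>
definition is_PF :: "'a set \<Rightarrow> ('a \<Rightarrow> 'a \<Rightarrow> nat) \<Rightarrow> 'a \<Rightarrow> ('a \<Rightarrow> int) \<Rightarrow> bool" where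
  "is_PF V mult s p \<longleftrightarrow> (\<forall>v\<in>V - {s}. 1 \<le> p v) \<and>
     (\<forall>S. S \<subseteq> V - {s} \<and> S \<noteq> {} \<longrightarrow>
        (\<exists>v\<in>S. p v \<le> int (deg_in mult (V - S) v)))"

definition decomposable :: "'a set \<Rightarrow> ('a \<Rightarrow> 'a \<Rightarrow> nat) \<Rightarrow> 'a \<Rightarrow> ('a \<Rightarrow> int) \<Rightarrow> 'a set \<Rightarrow> 'a set \<Rightarrow> bool" where
  "decomposable V mult s p A B \<longleftrightarrow>
     A \<noteq> {} \<and> B \<noteq> {} \<and> A \<inter> B = {} \<and> A \<union> B = V - {s} \<and>
     is_PF (A \<union> {s}) (induced_mult mult (A \<union> {s})) s p \<and>
     is_PF (B \<union> {s}) (induced_mult mult (B \<union> {s})) s (\<lambda>v. p v - int (deg_in mult A v))"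

definition is_PPF :: "'a set \<Rightarrow> ('a \<Rightarrow> 'a \<Rightarrow> nat) \<Rightarrow> 'a \<Rightarrow> ('a \<Rightarrow> int) \<Rightarrow> bool" where
  "is_PPF V mult s p \<longleftrightarrow> is_PF V mult s p \<and> \<not> (\<exists>A B. decomposable V mult s p A B)"

end

theory Submission
  imports Defs
begin

lemma cut_edge:
  assumes "(v, w) \<in> {(x, y). x \<in> U \<and> y \<in> U \<and> 0 < mult x y}\<^sup>*" "v \<in> S" "w \<notin> S"
  shows "\<exists>x\<in>S. \<exists>y. y \<notin> S \<and> x \<in> U \<and> y \<in> U \<and> 0 < mult x y"
  using assms
proof (induction rule: rtrancl_induct)
  case base then show ?case by simp
next
  case (step y z)
  show ?case
  proof (cases "y \<in> S")
    case True then show ?thesis using step by blast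
  next
    case False then show ?thesis using step by blast
  qed
qed

lemma PF_cong:
  assumes "is_PF V m s p" "\<forall>v\<in>V - {s}. q v = p v"
  shows "is_PF V m s q"
  unfolding is_PF_def
proof (intro conjI allI impI ballI)
  fix v assume "v \<in> V - {s}" then show "1 \<le> q v" using assms unfolding is_PF_def by auto
next
  fix S assume S: "S \<subseteq> V - {s} \<and> S \<noteq> {}"
  then obtain v where "v \<in> S" "p v \<le> int (deg_in m (V - S) v)" using assms(1) unfolding is_PF_def by blast
  then show "\<exists>v\<in>S. q v \<le> int (deg_in m (V - S) v)" using assms(2) S by (metis subsetD)
qed

lemma PF_restrict:
  assumes rg: "rooted_graph V mult s" and C: "C \<subseteq> V - {s}"
    and noedge: "\<forall>x\<in>C. \<forall>y\<in>V - {s} - C. mult x y = 0"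
    and pf: "is_PF V mult s p"
  shows "is_PF (C \<union> {s}) (induced_mult mult (C \<union> {s})) s p"
  unfolding is_PF_def
proof (intro conjI allI impI)
  show "\<forall>v\<in>C \<union> {s} - {s}. 1 \<le> p v" using pf C unfolding is_PF_def by auto
next
  fix S assume S: "S \<subseteq> C \<union> {s} - {s} \<and> S \<noteq> {}"
  then have "S \<subseteq> V - {s}" "S \<noteq> {}" using C by auto
  then obtain v where v: "v \<in> S" "p v \<le> int (deg_in mult (V - S) v)"
    using pf unfolding is_PF_def by blast
  have vC: "v \<in> C" using S v by auto
  have fin: "finite V" using rg unfolding rooted_graph_def by auto
  have sub: "C \<union> {s} - S \<subseteq> V - S" using C rg unfolding rooted_graph_def by auto
  have "deg_in mult (V - S) v = (\<Sum>w\<in>C \<union> {s} - S. mult v w)"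
    unfolding deg_in_def
    by (rule sum.mono_neutral_right[OF _ sub]) (use fin in simp, use noedge vC in blast)
  also have "\<dots> = deg_in (induced_mult mult (C \<union> {s})) (C \<union> {s} - S) v"
    unfolding deg_in_def induced_mult_def using vC by (intro sum.cong) auto
  finally show "\<exists>v\<in>S. p v \<le> int (deg_in (induced_mult mult (C \<union> {s})) (C \<union> {s} - S) v)"
    using v by auto
qed

theorem proposition2p3:
  fixes V :: "'a set" and mult :: "'a \<Rightarrow> 'a \<Rightarrow> nat" and s :: 'a
  assumes "rooted_graph V mult s"
    and "connected_on V mult"
  shows "(connected_on (V - {s}) mult \<longrightarrow> is_PPF V mult s (\<lambda>_. 1))
       \<and> (\<not> connected_on (V - {s}) mult \<longrightarrow> (\<forall>p. \<not> is_PPF V mult s p))"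
proof (intro conjI impI allI)
  have fin: "finite V" and sV: "s \<in> V" and sym: "\<And>v w. mult v w = mult w v"
    and supp: "\<And>v w. 0 < mult v w \<Longrightarrow> v \<in> V \<and> w \<in> V"
    using assms(1) unfolding rooted_graph_def by auto
  {
    assume conn: "connected_on (V - {s}) mult"
    have pf: "is_PF V mult s (\<lambda>_. 1)"
      unfolding is_PF_def
    proof (intro conjI allI impI ballI)
      fix S assume S: "S \<subseteq> V - {s} \<and> S \<noteq> {}"
      then obtain v where "v \<in> S" by auto
      then have "(v, s) \<in> {(x, y). x \<in> V \<and> y \<in> V \<and> 0 < mult x y}\<^sup>*"
        using assms(2) S sV unfolding connected_on_def by blast
      then obtain x y where xy: "x \<in> S" "y \<notin> S" "y \<in> V" "0 < mult x y"
        using cut_edge[of v s V mult S] \<open>v \<in> S\<close> S by blast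
      have "mult x y \<le> deg_in mult (V - S) x"
        unfolding deg_in_def by (rule member_le_sum) (use xy fin in auto)
      then show "\<exists>v\<in>S. (1::int) \<le> int (deg_in mult (V - S) v)"
        using xy by (intro bexI[of _ x]) auto
    qed auto
    have "\<not> decomposable V mult s (\<lambda>_. 1) A B" for A B
    proof
      assume d: "decomposable V mult s (\<lambda>_. 1) A B"
      then have A: "A \<noteq> {}" "B \<noteq> {}" "A \<inter> B = {}" "A \<union> B = V - {s}"
        and pfB: "is_PF (B \<union> {s}) (induced_mult mult (B \<union> {s})) s (\<lambda>v. 1 - int (deg_in mult A v))"
        unfolding decomposable_def by auto
      have finA: "finite A" using A fin by (metis finite_Diff finite_Un)
      have zero: "mult b a = 0" if "b \<in> B" "a \<in> A" for a b
      proof -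
        have "b \<in> A \<union> B" using \<open>b \<in> B\<close> by simp
        then have "b \<in> V - {s}" by (simp only: A(4))
        then have "b \<in> B \<union> {s} - {s}" using \<open>b \<in> B\<close> by simp
        then have "1 \<le> 1 - int (deg_in mult A b)" using pfB unfolding is_PF_def by blast
        then have "deg_in mult A b = 0" by simp
        then show ?thesis using finA that unfolding deg_in_def by simp
      qed
      obtain a b where ab: "a \<in> A" "b \<in> B" using A by auto
      then have "(a, b) \<in> {(x, y). x \<in> V - {s} \<and> y \<in> V - {s} \<and> 0 < mult x y}\<^sup>*"
        using conn A unfolding connected_on_def by blast
      then obtain x y where "x \<in> A" "y \<notin> A" "y \<in> V - {s}" "0 < mult x y"
        using cut_edge[of a b "V - {s}" mult A] ab A by blast
      moreover then have "y \<in> B" using A by auto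
      ultimately show False using zero[of y x] sym[of x y] by simp
    qed
    then show "is_PPF V mult s (\<lambda>_. 1)" using pf unfolding is_PPF_def by blast
  }
  {
    fix p
    assume nc: "\<not> connected_on (V - {s}) mult"
    let ?R = "{(x, y). x \<in> V - {s} \<and> y \<in> V - {s} \<and> 0 < mult x y}"
    obtain u w where uw: "u \<in> V - {s}" "w \<in> V - {s}" "(u, w) \<notin> ?R\<^sup>*"
      using nc unfolding connected_on_def by blast
    define A where "A = {x \<in> V - {s}. (u, x) \<in> ?R\<^sup>*}"
    define B where "B = V - {s} - A"
    have closed: "y \<in> A" if "x \<in> A" "y \<in> V - {s}" "0 < mult x y" for x y
      using that unfolding A_def by (auto intro: rtrancl_into_rtrancl)
    have noAB: "mult x y = 0" if "x \<in> A" "y \<in> B" for x y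
      using closed[of x y] that unfolding B_def by auto
    have noBA: "mult x y = 0" if "x \<in> B" "y \<in> A" for x y
      using noAB[of y x] sym[of x y] that by simp
    show "\<not> is_PPF V mult s p"
    proof
      assume ppf: "is_PPF V mult s p"
      then have pf: "is_PF V mult s p" unfolding is_PPF_def by auto
      have finA: "finite A" using fin unfolding A_def by auto
      have deg0: "deg_in mult A v = 0" if "v \<in> B" for v
        unfolding deg_in_def using noBA[OF that] finA by simp
      have AV: "A \<subseteq> V - {s}" by (auto simp: A_def)
      have nA: "\<forall>x\<in>A. \<forall>y\<in>V - {s} - A. mult x y = 0" using noAB unfolding B_def by blast
      have nB: "\<forall>x\<in>B. \<forall>y\<in>V - {s} - B. mult x y = 0" using noBA AV unfolding B_def by blast
      have "A \<noteq> {}" using uw unfolding A_def by auto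
      moreover have "B \<noteq> {}" using uw unfolding A_def B_def by auto
      moreover have "A \<inter> B = {}" "A \<union> B = V - {s}" unfolding B_def A_def by auto
      moreover have "is_PF (A \<union> {s}) (induced_mult mult (A \<union> {s})) s p"
        by (rule PF_restrict[OF assms(1) _ _ pf]) (use AV nA in auto)
      moreover have "is_PF (B \<union> {s}) (induced_mult mult (B \<union> {s})) s p"
        by (rule PF_restrict[OF assms(1) _ _ pf]) (use AV nB in \<open>auto simp: B_def\<close>)
      then have "is_PF (B \<union> {s}) (induced_mult mult (B \<union> {s})) s (\<lambda>v. p v - int (deg_in mult A v))"
        by (rule PF_cong) (use deg0 in auto)
      ultimately have "decomposable V mult s p A B" unfolding decomposable_def by blast
      then show False using ppf unfolding is_PPF_def by blast
    qed
  }
qed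

end
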